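(* Let $g\geqslant0$ be even. With respect to the lexicographic monomial order with $\alpha>\gamma$, the set \[\{\zeta^-_g,\ \gamma\zeta^-_{g-2},\ \gamma^2\zeta^-_{g-4},\ \ldots,\ \gamma^{g/2-1}\zeta^-_2,\ \gamma^{g/2}\}\] is a Gröbner basis for the ideal $J_g^-=J_{g+1}^-$. Consequently, the initial ideal of $J_g^-$ is generated by the monomials $\gamma^i\alpha^{g-2i}$, $0\leqslant i\leqslant g/2$, and the monomials $\alpha^a\gamma^c$ with $0\leqslant c<g/2$ and $0\leqslant a<g-2c$ represent a vector space basis of $\mathbb{C}[\alpha,\gamma]/J_g^-$.
   Context: $\zeta_k^-\in\mathbb{C}[\alpha,\gamma]$: $\zeta^-_i=0$ for $i<0$, $\zeta^-_0=1$, $\zeta^-_{k+1}=\alpha\zeta^-_k-16k^2\zeta^-_{k-1}+2k(k-1)\gamma\zeta^-_{k-2}$ for $k$ odd and $\zeta^-_{k+1}=\alpha\zeta^-_k+2k(k-1)\gamma\zeta^-_{k-2}$ for $k$ even ($k\geqslant0$); $J^-_k=(\zeta^-_k,\zeta^-_{k+1},\zeta^-_{k+2})$. *)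

theory Defs
  imports "HOL-Computational_Algebra.Polynomial"
begin

text \<open>The bivariate polynomial ring C[alpha, gamma] is represented as
  complex poly poly: the outer variable is alpha, the inner variable is gamma.
  Thus a polynomial is sum_a p_a(gamma) alpha^a.\<close>

definition alpha :: "complex poly poly" where
  "alpha = monom 1 1"

definition gamma :: "complex poly poly" where
  "gamma = monom (monom 1 1) 0"

definition mon :: "nat \<Rightarrow> nat \<Rightarrow> complex poly poly" where
  "mon a c = monom (monom 1 c) a"

text \<open>zeta^-_k; negative indices are 0.  In the recursion the terms with
  (truncated) index k-1, k-2 for small k carry a zero coefficient, so the
  natural-number truncation is harmless.\<close>
fun zeta :: "nat \<Rightarrow> complex poly poly" where
  "zeta 0 = 1"
| "zeta (Suc k) = alpha * zeta k
     - (if odd k then of_nat (16 * k^2) * zeta (k - 1) else 0)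
     + of_nat (2 * k * (k - 1)) * gamma * zeta (k - 2)"

definition is_ideal :: "'a::comm_ring_1 set \<Rightarrow> bool" where
  "is_ideal I \<longleftrightarrow> 0 \<in> I \<and> (\<forall>x\<in>I. \<forall>y\<in>I. x + y \<in> I) \<and> (\<forall>r. \<forall>x\<in>I. r * x \<in> I)"

definition gen_ideal :: "'a::comm_ring_1 set \<Rightarrow> 'a set" where
  "gen_ideal S = \<Inter> {I. is_ideal I \<and> S \<subseteq> I}"

definition J :: "nat \<Rightarrow> complex poly poly set" where
  "J k = gen_ideal {zeta k, zeta (k + 1), zeta (k + 2)}"

text \<open>Leading monomial w.r.t. the lexicographic order with alpha > gamma:
  alpha^a gamma^c is compared via (a, c) lexicographically, so the leading
  monomial of p \<noteq> 0 is alpha^(deg_alpha p) gamma^(deg of the leading alpha-coefficient).\<close>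
definition lex_lead_mon :: "complex poly poly \<Rightarrow> complex poly poly" where
  "lex_lead_mon p = mon (degree p) (degree (lead_coeff p))"

definition initial_ideal :: "complex poly poly set \<Rightarrow> complex poly poly set" where
  "initial_ideal I = gen_ideal {lex_lead_mon f | f. f \<in> I \<and> f \<noteq> 0}"

definition is_groebner_basis :: "complex poly poly set \<Rightarrow> complex poly poly set \<Rightarrow> bool" where
  "is_groebner_basis G I \<longleftrightarrow> G \<subseteq> I \<and>
     gen_ideal (lex_lead_mon ` (G - {0})) = initial_ideal I"

end

theory Submission
  imports Defs
begin


declare zeta.simps(2)[simp del]

lemma is_idealD:
  assumes "is_ideal I"
  shows "0 \<in> I" "x \<in> I \<Longrightarrow> y \<in> I \<Longrightarrow> x + y \<in> I" "x \<in> I \<Longrightarrow> r * x \<in> I"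
  using assms unfolding is_ideal_def by auto

lemma ideal_mult_right: "is_ideal I \<Longrightarrow> x \<in> I \<Longrightarrow> x * r \<in> I"
  using is_idealD(3)[of I x r] by (simp add: mult.commute)

lemma ideal_neg: "is_ideal I \<Longrightarrow> x \<in> I \<Longrightarrow> - x \<in> I"
  using is_idealD(3)[of I x "-1"] by simp

lemma ideal_diff: "is_ideal I \<Longrightarrow> x \<in> I \<Longrightarrow> y \<in> I \<Longrightarrow> x - y \<in> I"
  using is_idealD(2)[of I x "-y"] ideal_neg[of I y] by simp

lemma ideal_lin2: "is_ideal I \<Longrightarrow> a \<in> I \<Longrightarrow> b \<in> I \<Longrightarrow> x = r * a + s * b \<Longrightarrow> x \<in> I"
  by (simp add: is_idealD)

lemma ideal_lin3: "is_ideal I \<Longrightarrow> a \<in> I \<Longrightarrow> b \<in> I \<Longrightarrow> c \<in> I \<Longrightarrow> x = r * a + s * b + t * c \<Longrightarrow> x \<in> I"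
  by (simp add: is_idealD)

lemma ideal_sum: "is_ideal I \<Longrightarrow> (\<And>x. x \<in> A \<Longrightarrow> f x \<in> I) \<Longrightarrow> sum f A \<in> I"
  by (induction A rule: infinite_finite_induct) (auto simp: is_idealD)

lemma is_ideal_gen: "is_ideal (gen_ideal S)"
  unfolding gen_ideal_def is_ideal_def by auto

lemma gen_sub: "S \<subseteq> gen_ideal S"
  unfolding gen_ideal_def by auto

lemma gen_least: "is_ideal I \<Longrightarrow> S \<subseteq> I \<Longrightarrow> gen_ideal S \<subseteq> I"
  unfolding gen_ideal_def by auto

lemma is_ideal_UNIV: "is_ideal UNIV" unfolding is_ideal_def by auto

lemma is_ideal_colon: "is_ideal I \<Longrightarrow> is_ideal {y. u * y \<in> I}"
  unfolding is_ideal_def by (auto simp: algebra_simps)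

lemma ideal_one: "is_ideal I \<Longrightarrow> 1 \<in> I \<Longrightarrow> I = UNIV"
  using is_idealD(3)[of I 1] by auto

lemma J_gens: "zeta k \<in> J k" "zeta (k+1) \<in> J k" "zeta (k+2) \<in> J k"
  unfolding J_def using gen_sub[of "{zeta k, zeta (k+1), zeta (k+2)}"] by auto

lemma is_ideal_J: "is_ideal (J k)" unfolding J_def by (rule is_ideal_gen)

lemma J_sub: "is_ideal I \<Longrightarrow> zeta k \<in> I \<Longrightarrow> zeta (k+1) \<in> I \<Longrightarrow> zeta (k+2) \<in> I \<Longrightarrow> J k \<subseteq> I"
  unfolding J_def by (rule gen_least) auto

definition cst :: "complex \<Rightarrow> complex poly poly" where "cst c = [:[:c:]:]"

lemma alpha_eq: "alpha = [:0, 1:]" unfolding alpha_def by (simp add: monom_Suc)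
lemma gamma_eq: "gamma = [:[:0,1:]:]" unfolding gamma_def by (simp add: monom_Suc monom_0)
lemma cst_mult: "cst a * cst b = cst (a*b)" unfolding cst_def by simp
lemma cst_add: "cst a + cst b = cst (a+b)" unfolding cst_def by simp
lemma cst_diff: "cst a - cst b = cst (a-b)" unfolding cst_def by simp
lemma cst_1: "cst 1 = 1" unfolding cst_def by (simp add: one_pCons)
lemma cst_0: "cst 0 = 0" unfolding cst_def by simp
lemma of_nat_cst: "(of_nat n :: complex poly poly) = cst (of_nat n)" unfolding cst_def by (simp add: of_nat_poly)
lemma cst_inv: "c \<noteq> 0 \<Longrightarrow> cst (1/c) * cst c = 1" by (simp add: cst_mult cst_1)

lemma zrec_odd: "odd k \<Longrightarrow> zeta (Suc k) = alpha * zeta k - of_nat (16 * k^2) * zeta (k - 1) + of_nat (2 * k * (k - 1)) * gamma * zeta (k - 2)"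
  by (simp add: zeta.simps(2))
lemma zrec_even: "even k \<Longrightarrow> zeta (Suc k) = alpha * zeta k + of_nat (2 * k * (k - 1)) * gamma * zeta (k - 2)"
  by (simp add: zeta.simps(2))


section \<open>Evaluation at gamma = 0\<close>

definition ev0 :: "complex poly poly \<Rightarrow> complex poly" where
  "ev0 P = map_poly (\<lambda>q. poly q 0) P"

lemma coeff_ev0: "coeff (ev0 P) n = poly (coeff P n) 0"
  unfolding ev0_def by (simp add: coeff_map_poly)

lemma ev0_add: "ev0 (P + Q) = ev0 P + ev0 Q"
  by (rule poly_eqI) (simp add: coeff_ev0)

lemma ev0_diff: "ev0 (P - Q) = ev0 P - ev0 Q"
  by (rule poly_eqI) (simp add: coeff_ev0)

lemma ev0_smult: "ev0 (smult a Q) = smult (poly a 0) (ev0 Q)"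
  by (rule poly_eqI) (simp add: coeff_ev0)

lemma ev0_pCons: "ev0 (pCons a Q) = pCons (poly a 0) (ev0 Q)"
  by (rule poly_eqI) (simp add: coeff_ev0 coeff_pCons split: nat.splits)

lemma ev0_mult: "ev0 (P * Q) = ev0 P * ev0 Q"
proof (induction P)
  case 0 then show ?case by (simp add: ev0_def)
next
  case (pCons a p)
  have "ev0 (pCons a p * Q) = ev0 (smult a Q + pCons 0 (p * Q))" by simp
  also have "\<dots> = smult (poly a 0) (ev0 Q) + pCons 0 (ev0 p * ev0 Q)"
    by (simp add: ev0_add ev0_smult ev0_pCons pCons.IH)
  also have "\<dots> = ev0 (pCons a p) * ev0 Q" by (simp add: ev0_pCons)
  finally show ?case .
qed

lemma ev0_gamma: "ev0 gamma = 0"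
  by (rule poly_eqI) (simp add: coeff_ev0 gamma_eq coeff_pCons split: nat.splits)

lemma ev0_alpha: "ev0 alpha = [:0,1:]"
  by (rule poly_eqI) (simp add: coeff_ev0 alpha_eq coeff_pCons split: nat.splits)

lemma ev0_cst: "ev0 (cst c) = [:c:]"
  by (rule poly_eqI) (simp add: coeff_ev0 cst_def coeff_pCons split: nat.splits)

lemma ev0_one: "ev0 1 = 1"
  using ev0_cst[of 1] by (simp add: cst_1)

lemma degree_ev0: "degree (ev0 P) \<le> degree P"
  unfolding ev0_def by (rule map_poly_degree_leq)

lemma gamma_dvd_iff: "gamma dvd P \<longleftrightarrow> ev0 P = 0"
proof -
  have "gamma dvd P \<longleftrightarrow> (\<forall>n. [:0,1:] dvd coeff P n)"
    unfolding gamma_eq by (rule const_poly_dvd_iff)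
  also have "\<dots> \<longleftrightarrow> (\<forall>n. poly (coeff P n) 0 = 0)"
  proof -
    have h: "poly q 0 = 0 \<longleftrightarrow> [:0,1:] dvd q" for q :: "complex poly"
      using poly_eq_0_iff_dvd[of q "0::complex"] by (simp only: minus_zero)
    show ?thesis by (simp only: h)
  qed
  also have "\<dots> \<longleftrightarrow> ev0 P = 0"
    by (auto simp: poly_eq_iff coeff_ev0)
  finally show ?thesis .
qed

section \<open>Degrees of zeta\<close>

lemma degree_alpha_mult: "degree (alpha * p) \<le> Suc (degree p)"
  unfolding alpha_eq by (cases "p = 0") (auto simp: degree_mult_eq)

lemma degree_of_nat_mult: "degree (of_nat n * p :: complex poly poly) \<le> degree p"
  by (metis degree_mult_le add_0 degree_of_nat)

lemma degree_gamma_mult: "degree (gamma * p) \<le> degree p"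
  unfolding gamma_eq by (simp)

lemma alpha_pow: "alpha ^ k = monom 1 k"
  unfolding alpha_def by (simp add: monom_power)

lemma deg_from_low: "degree (z - alpha ^ Suc i) \<le> i \<Longrightarrow> degree z \<le> Suc i"
proof -
  assume a: "degree (z - alpha ^ Suc i) \<le> i"
  have b: "degree (alpha ^ Suc i) \<le> Suc i" by (simp only: alpha_pow degree_monom_le)
  have "z = (z - alpha ^ Suc i) + alpha ^ Suc i" by simp
  then show ?thesis using degree_add_le[of "z - alpha ^ Suc i" "Suc i" "alpha ^ Suc i"] a b by simp
qed

lemma zeta_deg_aux: "degree (zeta (Suc k) - alpha ^ Suc k) \<le> k \<and> degree (zeta k) \<le> k"
proof (induction k rule: less_induct)
  case (less k)
  have dz: "degree (zeta j) \<le> j" if "j < k" for j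
  proof (cases j)
    case 0 then show ?thesis by simp
  next
    case (Suc i)
    with less[of i] that have "degree (zeta (Suc i) - alpha ^ Suc i) \<le> i" by simp
    then show ?thesis using Suc deg_from_low by blast
  qed
  have dk: "degree (zeta k) \<le> k"
  proof (cases k)
    case 0 then show ?thesis by simp
  next
    case (Suc i)
    with less[of i] have "degree (zeta (Suc i) - alpha ^ Suc i) \<le> i" by simp
    then show ?thesis using Suc deg_from_low by blast
  qed
  have e: "zeta (Suc k) - alpha ^ Suc k = alpha * (zeta k - alpha ^ k)
      - (if odd k then of_nat (16 * k^2) * zeta (k - 1) else 0)
      + of_nat (2 * k * (k - 1)) * gamma * zeta (k - 2)"
    by (simp add: zeta.simps(2) algebra_simps)
  have d1: "degree (alpha * (zeta k - alpha ^ k)) \<le> k"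
  proof (cases k)
    case 0 then show ?thesis by simp
  next
    case (Suc i)
    with less[of i] have "degree (zeta k - alpha ^ k) \<le> i" by simp
    then show ?thesis using degree_alpha_mult[of "zeta k - alpha ^ k"] Suc by simp
  qed
  have d2: "degree (if odd k then of_nat (16 * k^2) * zeta (k - 1) else 0 :: complex poly poly) \<le> k"
  proof (cases "odd k")
    case True
    then have "k > 0" by (cases k) auto
    then have "degree (zeta (k-1)) \<le> k - 1" using dz[of "k-1"] by simp
    then show ?thesis using True degree_of_nat_mult[of "16 * k^2" "zeta (k-1)"] by simp
  qed simp
  have d3: "degree (of_nat (2 * k * (k - 1)) * gamma * zeta (k - 2) :: complex poly poly) \<le> k"
  proof (cases "k \<ge> 2")
    case True
    then have "degree (zeta (k-2)) \<le> k - 2" using dz[of "k-2"] by simp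
    then show ?thesis using degree_of_nat_mult[of "2 * k * (k - 1)" "gamma * zeta (k-2)"]
      degree_gamma_mult[of "zeta (k-2)"] by (simp add: mult.assoc)
  next
    case False
    then have "2 * k * (k - 1) = 0" by (cases k) auto
    then have "(of_nat (2 * k * (k - 1)) :: complex poly poly) = 0" by (simp only: of_nat_0)
    then show ?thesis by (simp only: mult_zero_left degree_0 le0)
  qed
  have "degree (zeta (Suc k) - alpha ^ Suc k) \<le> k"
    unfolding e using d1 d2 d3
    by (meson degree_add_le degree_diff_le)
  with dk show ?case by blast
qed

lemma degree_zeta_low: "0 < k \<Longrightarrow> degree (zeta k - alpha ^ k) < k"
proof -
  assume k: "0 < k"
  then have "Suc (k - 1) = k" by simp
  then have "degree (zeta k - alpha ^ k) \<le> k - 1" using zeta_deg_aux[of "k - 1"] by metis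
  with k show ?thesis by linarith
qed

lemma zeta_0: "zeta 0 = 1" by simp

lemma zeta_1: "zeta 1 = alpha"
  using zrec_even[of 0] by simp

lemma coeff_zeta_top: "coeff (zeta k) k = 1"
proof (cases k)
  case 0 then show ?thesis by simp
next
  case (Suc i)
  have "coeff (zeta k - alpha ^ k) k = 0" using degree_zeta_low[of k] Suc
    by (intro coeff_eq_0) simp
  moreover have "coeff (alpha ^ k) k = 1" by (simp only: alpha_pow coeff_monom) simp
  ultimately show ?thesis by (simp only: coeff_diff) simp
qed

lemma degree_zeta: "degree (zeta k) = k"
  using zeta_deg_aux[of k] coeff_zeta_top[of k]
  by (metis le_antisym le_degree one_neq_zero)

lemma zeta_nz: "zeta k \<noteq> 0"
  using coeff_zeta_top[of k] by auto

lemma lead_coeff_zeta: "lead_coeff (zeta k) = 1"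
  by (simp add: degree_zeta coeff_zeta_top)

lemma ev0_zeta_coeff: "coeff (ev0 (zeta k)) k = 1"
  by (simp add: coeff_ev0 coeff_zeta_top)

lemma ev0_zeta_degree: "degree (ev0 (zeta k)) = k"
  using degree_ev0[of "zeta k"] ev0_zeta_coeff[of k]
  by (metis degree_zeta le_antisym le_degree one_neq_zero)

lemma ev0_zeta_nz: "ev0 (zeta k) \<noteq> 0"
  using ev0_zeta_coeff[of k] by auto




lemma ideal_cancel_nat: fixes x :: "complex poly poly" shows "is_ideal I \<Longrightarrow> c \<noteq> 0 \<Longrightarrow> of_nat c * x \<in> I \<Longrightarrow> x \<in> I"
proof -
  assume I: "is_ideal I" and c: "c \<noteq> 0" and x: "of_nat c * x \<in> I"
  have e: "cst (1 / of_nat c) * of_nat c = 1" using c by (simp add: of_nat_cst cst_inv)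
  have eq: "x = cst (1 / of_nat c) * (of_nat c * x)"
    by (simp add: mult.assoc[symmetric] e)
  show ?thesis by (subst eq) (rule is_idealD(3)[OF I x])
qed

fun Iset :: "nat \<Rightarrow> complex poly poly set" where
  "Iset 0 = UNIV"
| "Iset (Suc h) = {a * zeta (2*h+2) + gamma * y | a y. y \<in> Iset h}"

lemma Iset_SucI: "x = a * zeta (2*h+2) + gamma * y \<Longrightarrow> y \<in> Iset h \<Longrightarrow> x \<in> Iset (Suc h)"
  by auto

lemma is_ideal_Iset: "is_ideal (Iset h)"
proof (induction h)
  case 0 then show ?case by (simp add: is_ideal_UNIV)
next
  case (Suc h)
  show ?case unfolding is_ideal_def
  proof (intro conjI ballI allI)
    show "0 \<in> Iset (Suc h)" using is_idealD(1)[OF Suc] by force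
  next
    fix x y assume "x \<in> Iset (Suc h)" "y \<in> Iset (Suc h)"
    then obtain a u b v where "x = a * zeta (2*h+2) + gamma * u" "u \<in> Iset h"
      "y = b * zeta (2*h+2) + gamma * v" "v \<in> Iset h" by auto
    then have "x + y = (a+b) * zeta (2*h+2) + gamma * (u+v)" "u + v \<in> Iset h"
      using is_idealD(2)[OF Suc] by (auto simp: algebra_simps)
    then show "x + y \<in> Iset (Suc h)" by auto
  next
    fix r x assume "x \<in> Iset (Suc h)"
    then obtain a u where "x = a * zeta (2*h+2) + gamma * u" "u \<in> Iset h" by auto
    have ru: "r * u \<in> Iset h" using is_idealD(3)[OF Suc \<open>u \<in> Iset h\<close>] .
    have eq: "r * x = (r*a) * zeta (2*h+2) + gamma * (r*u)"
      using \<open>x = _\<close> by (simp add: algebra_simps)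
    show "r * x \<in> Iset (Suc h)" by (rule Iset_SucI[OF eq ru])
  qed
qed

lemma Iset_gamma: "y \<in> Iset h \<Longrightarrow> gamma * y \<in> Iset (Suc h)"
  by (rule Iset_SucI[of _ 0]) simp_all

lemma Iset_zeta: "a * zeta (2*h+2) \<in> Iset (Suc h)"
  using is_idealD(1)[OF is_ideal_Iset[of h]] by (intro Iset_SucI[of _ a _ 0]) simp_all

lemma rec1: "zeta (2*h+3) = alpha * zeta (2*h+2) + of_nat (2*(2*h+2)*(2*h+1)) * gamma * zeta (2*h)"
proof -
  have ev: "even (2*h+2)" by simp
  have e: "Suc (2*h+2) = 2*h+3" "2*h+2-1 = 2*h+1" "2*h+2-2 = 2*h" by simp_all
  from zrec_even[OF ev] show ?thesis by (simp only: e)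
qed

lemma rec2: "zeta (2*h+4) = alpha * zeta (2*h+3) - of_nat (16*(2*h+3)^2) * zeta (2*h+2)
   + of_nat (2*(2*h+3)*(2*h+2)) * gamma * zeta (2*h+1)"
proof -
  have ev: "odd (2*h+3)" by simp
  have e: "Suc (2*h+3) = 2*h+4" "2*h+3-1 = 2*h+2" "2*h+3-2 = 2*h+1" by simp_all
  from zrec_odd[OF ev] show ?thesis by (simp only: e)
qed

lemma rec0: "zeta (2*h+1) = alpha * zeta (2*h) + of_nat (2*(2*h)*(2*h-1)) * gamma * zeta (2*h-2)"
proof -
  have "even (2*h)" by simp
  from zrec_even[OF this] show ?thesis by simp
qed

lemma Jg: "zeta (2*h) \<in> J (2*h)" "zeta (2*h+1) \<in> J (2*h)" "zeta (2*h+2) \<in> J (2*h)"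
  using J_gens[of "2*h"] by auto

lemma Jg1: "zeta (2*h+1) \<in> J (2*h+1)" "zeta (2*h+2) \<in> J (2*h+1)" "zeta (2*h+3) \<in> J (2*h+1)"
  using J_gens[of "2*h+1"] by (auto simp: eval_nat_numeral)

lemma Jg2: "zeta (2*h+2) \<in> J (2*h+2)" "zeta (2*h+3) \<in> J (2*h+2)" "zeta (2*h+4) \<in> J (2*h+2)"
  using J_gens[of "2*h+2"] by (auto simp: eval_nat_numeral)

lemma gamma_J_step: "gamma * y \<in> J (2*h+2)" if "y \<in> J (2*h)"
proof -
  let ?I = "{y. gamma * y \<in> J (2*h+2)}"
  have I: "is_ideal ?I" by (rule is_ideal_colon[OF is_ideal_J])
  have "of_nat (2*(2*h+2)*(2*h+1)) * (gamma * zeta (2*h)) = zeta (2*h+3) - alpha * zeta (2*h+2)"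
    by (simp add: rec1 mult.assoc)
  also have "\<dots> \<in> J (2*h+2)" using Jg2 is_ideal_J by (intro ideal_diff is_idealD(3)) auto
  finally have a: "gamma * zeta (2*h) \<in> J (2*h+2)" by (rule ideal_cancel_nat[OF is_ideal_J, rotated]) simp
  have "of_nat (2*(2*h+3)*(2*h+2)) * (gamma * zeta (2*h+1)) =
     zeta (2*h+4) - alpha * zeta (2*h+3) + of_nat (16*(2*h+3)^2) * zeta (2*h+2)"
    by (simp add: rec2 mult.assoc)
  also have "\<dots> \<in> J (2*h+2)" using Jg2 is_ideal_J by (intro is_idealD(2) ideal_diff is_idealD(3)) auto
  finally have b: "gamma * zeta (2*h+1) \<in> J (2*h+2)" by (rule ideal_cancel_nat[OF is_ideal_J, rotated]) simp
  have c: "gamma * zeta (2*h+2) \<in> J (2*h+2)" using Jg2 is_ideal_J by (intro is_idealD(3)) auto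
  have "J (2*h) \<subseteq> ?I" using a b c by (intro J_sub[OF I]) (auto simp: eval_nat_numeral)
  with that show ?thesis by auto
qed

lemma J_Iset: "J (2*h) = Iset h"
proof (induction h)
  case 0
  have "zeta 0 \<in> J 0" using J_gens[of 0] by simp
  then show ?case using ideal_one[OF is_ideal_J] by simp
next
  case (Suc h)
  have e: "2 * Suc h = 2*h+2" by simp
  have z2: "zeta (2*h+2) \<in> Iset (Suc h)" using Iset_zeta[of 1 h] by simp
  have g: "gamma * y \<in> Iset (Suc h)" if "y \<in> J (2*h)" for y
    using that Suc Iset_gamma by auto
  have t3: "of_nat (2*(2*h+2)*(2*h+1)) * zeta (2*h) \<in> Iset h"
    using Suc.IH Jg(1)[of h] by (intro is_idealD(3)[OF is_ideal_Iset]) auto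
  have "zeta (2*h+3) = alpha * zeta (2*h+2) + gamma * (of_nat (2*(2*h+2)*(2*h+1)) * zeta (2*h))"
    unfolding rec1 by (simp add: algebra_simps)
  then have z3: "zeta (2*h+3) \<in> Iset (Suc h)" using t3 by (rule Iset_SucI)
  have t4: "gamma * (of_nat (2*(2*h+3)*(2*h+2)) * zeta (2*h+1)) \<in> Iset (Suc h)"
    using Suc.IH Jg(2)[of h] by (intro Iset_gamma is_idealD(3)[OF is_ideal_Iset]) auto
  have "zeta (2*h+4) = alpha * zeta (2*h+3) - of_nat (16*(2*h+3)^2) * zeta (2*h+2)
     + gamma * (of_nat (2*(2*h+3)*(2*h+2)) * zeta (2*h+1))"
    unfolding rec2 by (simp add: algebra_simps)
  also have "\<dots> \<in> Iset (Suc h)"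
  proof -
    have I: "is_ideal (Iset (Suc h))" by (rule is_ideal_Iset)
    have m1: "alpha * zeta (2*h+3) \<in> Iset (Suc h)" by (rule is_idealD(3)[OF I z3])
    have m2: "of_nat (16*(2*h+3)^2) * zeta (2*h+2) \<in> Iset (Suc h)" by (rule is_idealD(3)[OF I z2])
    show ?thesis by (rule is_idealD(2)[OF I ideal_diff[OF I m1 m2] t4])
  qed
  finally have z4: "zeta (2*h+4) \<in> Iset (Suc h)" .
  show ?case
  proof
    show "J (2 * Suc h) \<subseteq> Iset (Suc h)" unfolding e
      by (rule J_sub[OF is_ideal_Iset]) (use z2 z3 z4 in \<open>auto simp: eval_nat_numeral\<close>)
  next
    show "Iset (Suc h) \<subseteq> J (2 * Suc h)" unfolding e
    proof
      fix x assume "x \<in> Iset (Suc h)"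
      then obtain a y where x: "x = a * zeta (2*h+2) + gamma * y" "y \<in> Iset h" by auto
      then have "gamma * y \<in> J (2*h+2)" using gamma_J_step Suc by auto
      moreover have "a * zeta (2*h+2) \<in> J (2*h+2)" using Jg2 is_ideal_J by (intro is_idealD(3)) auto
      ultimately show "x \<in> J (2*h+2)" unfolding x using is_idealD(2)[OF is_ideal_J] by auto
    qed
  qed
qed


lemma zeta_Iset_pred: "zeta (2*h+2) \<in> Iset h"
  using Jg(3)[of h] J_Iset[of h] by simp

lemma gamma_mult: "gamma * p = smult [:0,1:] p"
  unfolding gamma_eq by simp

lemma gamma_nz: "gamma \<noteq> 0" unfolding gamma_eq by simp

lemma Iset_colon: "gamma * x \<in> Iset (Suc h) \<Longrightarrow> x \<in> Iset h"
proof -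
  assume "gamma * x \<in> Iset (Suc h)"
  then obtain a y where e: "gamma * x = a * zeta (2*h+2) + gamma * y" and y: "y \<in> Iset h" by auto
  have "ev0 (gamma * x) = ev0 a * ev0 (zeta (2*h+2)) + ev0 gamma * ev0 y"
    unfolding e by (simp add: ev0_add ev0_mult)
  then have "ev0 a * ev0 (zeta (2*h+2)) = 0" by (simp add: ev0_mult ev0_gamma)
  then have "ev0 a = 0" using ev0_zeta_nz by simp
  then obtain a' where a: "a = gamma * a'" using gamma_dvd_iff by (metis dvdE)
  have "gamma * x = gamma * (a' * zeta (2*h+2) + y)" unfolding e a by (simp add: algebra_simps)
  then have "x = a' * zeta (2*h+2) + y" using gamma_nz by simp
  moreover have "a' * zeta (2*h+2) + y \<in> Iset h"
    using zeta_Iset_pred[of h] y is_ideal_Iset[of h] by (intro is_idealD(2) is_idealD(3)) auto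
  ultimately show ?thesis by simp
qed

lemma gamma_pow_zeta_Iset: "i \<le> h \<Longrightarrow> gamma ^ i * zeta (2*h - 2*i) \<in> Iset h"
proof (induction h arbitrary: i)
  case 0 then show ?case by simp
next
  case (Suc h)
  show ?case
  proof (cases i)
    case 0
    then show ?thesis using Iset_zeta[of 1 h] by simp
  next
    case (Suc j)
    with Suc.prems have "j \<le> h" by simp
    with Suc.IH have "gamma ^ j * zeta (2*h - 2*j) \<in> Iset h" by simp
    then have "gamma * (gamma ^ j * zeta (2*h - 2*j)) \<in> Iset (Suc h)" by (rule Iset_gamma)
    then show ?thesis using Suc by (simp add: mult.assoc)
  qed
qed

lemma gamma_pow_eq: "gamma ^ i = [:monom 1 i:]"
  by (induction i) (auto simp: gamma_eq monom_Suc one_pCons monom_0)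

lemma gamma_pow_mult: "gamma ^ i * p = smult (monom 1 i) p"
  unfolding gamma_pow_eq by simp

lemma degree_gamma_pow_mult: "degree (gamma ^ i * p) = degree p"
  unfolding gamma_pow_mult by simp

lemma lead_coeff_gamma_pow_mult: "lead_coeff (gamma ^ i * p) = monom 1 i * lead_coeff p"
  unfolding gamma_pow_mult by simp

lemma LM_gamma_zeta: "lex_lead_mon (gamma ^ i * zeta m) = mon m i"
proof -
  have l: "lead_coeff (gamma ^ i * zeta m) = monom 1 i"
    by (simp only: lead_coeff_gamma_pow_mult lead_coeff_zeta mult_1_right)
  show ?thesis unfolding lex_lead_mon_def l
    by (simp add: degree_gamma_pow_mult degree_zeta degree_monom_eq)
qed

lemma gamma_pow_zeta_nz: "gamma ^ i * zeta m \<noteq> 0"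
  unfolding gamma_pow_mult using zeta_nz by simp

lemma KL: "f \<in> Iset h \<Longrightarrow> f \<noteq> 0 \<Longrightarrow> \<not> (degree (lead_coeff f) < h \<and> degree f + 2 * degree (lead_coeff f) < 2 * h)"
proof (induction h arbitrary: f)
  case 0 then show ?case by simp
next
  case (Suc h)
  show ?case
  proof
    assume A: "degree (lead_coeff f) < Suc h \<and> degree f + 2 * degree (lead_coeff f) < 2 * Suc h"
    obtain a y where e: "f = a * zeta (2*h+2) + gamma * y" and y: "y \<in> Iset h" using Suc.prems by auto
    have ev: "ev0 f = ev0 a * ev0 (zeta (2*h+2))"
      unfolding e by (simp add: ev0_add ev0_mult ev0_gamma)
    have "ev0 a = 0"
    proof (rule ccontr)
      assume "ev0 a \<noteq> 0"
      then have "degree (ev0 f) = degree (ev0 a) + (2*h+2)"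
        unfolding ev using ev0_zeta_nz by (simp add: degree_mult_eq ev0_zeta_degree)
      moreover have "degree (ev0 f) \<le> degree f" by (rule degree_ev0)
      ultimately show False using A by simp
    qed
    then obtain a' where a: "a = gamma * a'" using gamma_dvd_iff by (metis dvdE)
    define f1 where "f1 = a' * zeta (2*h+2) + y"
    have f: "f = gamma * f1" unfolding f1_def e a by (simp add: algebra_simps)
    have f1: "f1 \<in> Iset h" unfolding f1_def
      using zeta_Iset_pred[of h] y is_ideal_Iset[of h] by (intro is_idealD(2) is_idealD(3)) auto
    have f1nz: "f1 \<noteq> 0" using Suc.prems f by auto
    have d: "degree f = degree f1" unfolding f gamma_mult by simp
    have l: "lead_coeff f = [:0,1:] * lead_coeff f1" unfolding f gamma_mult by simp
    have "degree (lead_coeff f) = Suc (degree (lead_coeff f1))"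
      unfolding l using f1nz by (simp add: degree_mult_eq)
    then have "degree (lead_coeff f1) < h \<and> degree f1 + 2 * degree (lead_coeff f1) < 2 * h"
      using A d by simp
    with Suc.IH[OF f1 f1nz] show False by blast
  qed
qed

definition inN :: "nat \<Rightarrow> complex poly poly \<Rightarrow> bool" where
  "inN h f \<longleftrightarrow> (\<forall>a c. coeff (coeff f a) c \<noteq> 0 \<longrightarrow> c < h \<and> a + 2 * c < 2 * h)"

lemma inN_Iset_zero: "inN h f \<Longrightarrow> f \<in> Iset h \<Longrightarrow> f = 0"
proof (rule ccontr)
  assume N: "inN h f" and I: "f \<in> Iset h" and nz: "f \<noteq> 0"
  then have "lead_coeff f \<noteq> 0" by simp
  then have "coeff (coeff f (degree f)) (degree (lead_coeff f)) \<noteq> 0" by simp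
  with N have "degree (lead_coeff f) < h \<and> degree f + 2 * degree (lead_coeff f) < 2 * h"
    unfolding inN_def by blast
  with KL[OF I nz] show False by blast
qed




lemma inN_add: "inN h x \<Longrightarrow> inN h y \<Longrightarrow> inN h (x + y)"
  unfolding inN_def
proof (intro allI impI)
  fix a c assume A: "\<forall>a c. coeff (coeff x a) c \<noteq> 0 \<longrightarrow> c < h \<and> a + 2 * c < 2 * h"
     "\<forall>a c. coeff (coeff y a) c \<noteq> 0 \<longrightarrow> c < h \<and> a + 2 * c < 2 * h"
     and "coeff (coeff (x + y) a) c \<noteq> 0"
  then have "coeff (coeff x a) c \<noteq> 0 \<or> coeff (coeff y a) c \<noteq> 0" by auto
  with A show "c < h \<and> a + 2 * c < 2 * h" by blast
qed

lemma inN_0: "inN h 0" unfolding inN_def by simp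

lemma mon_mult: "mon a c * mon a' c' = mon (a + a') (c + c')"
  unfolding mon_def by (simp add: mult_monom)

lemma coeff_coeff_monom: "coeff (coeff (monom (monom v c) d) a) c' = (if a = d \<and> c' = c then v else 0)"
  by (simp add: coeff_monom)

lemma lowdeg_add: "(r = 0 \<or> degree r < d) \<Longrightarrow> (r' = 0 \<or> degree r' < d) \<Longrightarrow> (r + r' = 0 \<or> degree (r + r') < (d::nat))"
proof (cases "d = 0")
  case True
  then show "(r = 0 \<or> degree r < d) \<Longrightarrow> (r' = 0 \<or> degree r' < d) \<Longrightarrow> ?thesis" by auto
next
  case False
  assume a: "r = 0 \<or> degree r < d" "r' = 0 \<or> degree r' < d"
  then have "degree r \<le> d - 1" "degree r' \<le> d - 1" using False by auto
  then have "degree (r + r') \<le> d - 1" by (rule degree_add_le)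
  then have "degree (r + r') < d" using False by linarith
  then show ?thesis by blast
qed

definition goodr :: "nat \<Rightarrow> nat \<Rightarrow> complex poly poly \<Rightarrow> bool" where
  "goodr h d x \<longleftrightarrow> (\<exists>n i r. x = n + i + r \<and> inN h n \<and> i \<in> Iset h \<and> (r = 0 \<or> degree r < d))"

lemma goodr_add: "goodr h d x \<Longrightarrow> goodr h d y \<Longrightarrow> goodr h d (x + y)"
proof -
  assume "goodr h d x" "goodr h d y"
  then obtain n i r n' i' r' where x: "x = n + i + r" "inN h n" "i \<in> Iset h" "r = 0 \<or> degree r < d"
    and y: "y = n' + i' + r'" "inN h n'" "i' \<in> Iset h" "r' = 0 \<or> degree r' < d"
    unfolding goodr_def by blast
  have "x + y = (n + n') + (i + i') + (r + r')" using x y by (simp add: algebra_simps)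
  moreover have "inN h (n + n')" using x y inN_add by blast
  moreover have "i + i' \<in> Iset h" using x y is_idealD(2)[OF is_ideal_Iset] by blast
  moreover have "r + r' = 0 \<or> degree (r + r') < d"
    using x(4) y(4) by (rule lowdeg_add)
  ultimately show ?thesis unfolding goodr_def by blast
qed

lemma goodr_0: "goodr h d 0"
  unfolding goodr_def using inN_0 is_idealD(1)[OF is_ideal_Iset] by (intro exI[of _ 0]) auto

lemma goodr_sum: "finite A \<Longrightarrow> (\<And>x. x \<in> A \<Longrightarrow> goodr h d (f x)) \<Longrightarrow> goodr h d (sum f A)"
  by (induction A rule: finite_induct) (auto intro: goodr_add goodr_0)

lemma monom_mon_split: "monom (monom v c) d = monom (monom v 0) k * gamma ^ c * alpha ^ m" if "d = k + m"
proof -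
  have "monom (monom v 0) k * gamma ^ c = monom (monom v c) k"
    by (simp add: gamma_pow_eq mult_monom smult_monom)
  moreover have "monom (monom v c) k * alpha ^ m = monom (monom v c) d"
    using that by (simp add: alpha_pow mult_monom)
  ultimately show ?thesis by simp
qed

lemma goodr_monom: "goodr h d (monom (monom v c) d)"
proof (cases "h \<le> c")
  case True
  have "gamma ^ h \<in> Iset h" using gamma_pow_zeta_Iset[of h h] by simp
  then have "monom (monom v (c - h)) d * gamma ^ h \<in> Iset h"
    by (rule is_idealD(3)[OF is_ideal_Iset])
  moreover have "monom (monom v (c - h)) d * gamma ^ h = monom (monom v c) d"
    using True by (simp add: gamma_pow_eq mult_monom smult_monom)
  ultimately show ?thesis unfolding goodr_def using inN_0
    by (intro exI[of _ 0] exI[of _ "monom (monom v c) d"] exI[of _ 0]) auto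
next
  case False
  show ?thesis
  proof (cases "d + 2 * c < 2 * h")
    case True
    have "inN h (monom (monom v c) d)" unfolding inN_def coeff_coeff_monom using True False by auto
    then show ?thesis unfolding goodr_def using is_idealD(1)[OF is_ideal_Iset]
      by (intro exI[of _ "monom (monom v c) d"] exI[of _ 0] exI[of _ 0]) auto
  next
    case F2: False
    define m where "m = 2*h - 2*c"
    have m: "0 < m" "m \<le> d" "d = (d - m) + m" using False F2 unfolding m_def by auto
    define M where "M = monom (monom v c) (d - m)"
    have Me: "M = monom (monom v 0) (d - m) * gamma ^ c"
      unfolding M_def by (simp add: gamma_pow_eq mult_monom smult_monom)
    have "M * alpha ^ m = monom (monom v c) d"
      unfolding M_def using m(3) by (simp add: alpha_pow mult_monom)
    then have e: "monom (monom v c) d = M * zeta m - M * (zeta m - alpha ^ m)"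
      by (simp add: algebra_simps)
    have i: "M * zeta m \<in> Iset h"
    proof -
      have "gamma ^ c * zeta m \<in> Iset h" unfolding m_def using False by (intro gamma_pow_zeta_Iset) simp
      then have "monom (monom v 0) (d - m) * (gamma ^ c * zeta m) \<in> Iset h"
        by (rule is_idealD(3)[OF is_ideal_Iset])
      then show ?thesis unfolding Me by (simp add: mult.assoc)
    qed
    have dM: "degree M \<le> d - m" unfolding M_def by (rule degree_monom_le)
    have "degree (- (M * (zeta m - alpha ^ m))) < d"
    proof -
      have "degree (M * (zeta m - alpha ^ m)) \<le> degree M + degree (zeta m - alpha ^ m)"
        by (rule degree_mult_le)
      moreover have "degree (zeta m - alpha ^ m) < m" using degree_zeta_low m(1) by blast
      ultimately show ?thesis using dM m by simp
    qed
    then show ?thesis unfolding goodr_def using inN_0 e i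
      by (intro exI[of _ 0] exI[of _ "M * zeta m"] exI[of _ "- (M * (zeta m - alpha ^ m))"]) auto
  qed
qed

lemma monom_as_sum: "monom q d = (\<Sum>c\<le>degree q. monom (monom (coeff q c) c) d)"
proof -
  have "monom q d = monom (\<Sum>c\<le>degree q. monom (coeff q c) c) d" by (simp add: poly_as_sum_of_monoms)
  also have "\<dots> = (\<Sum>c\<le>degree q. monom (monom (coeff q c) c) d)"
    by (rule poly_eqI) (simp add: coeff_sum)
  finally show ?thesis .
qed

lemma reduce: "\<exists>n. inN h n \<and> p - n \<in> Iset h"
proof (induction "degree p" arbitrary: p rule: less_induct)
  case less
  define d where "d = degree p"
  define p' where "p' = p - monom (coeff p d) d"
  have p'd: "p' = 0 \<or> degree p' < d"
  proof (cases "d = 0")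
    case True
    then have "[: coeff p 0 :] = p" using degree_0_id[of p] d_def by simp
    then have "p' = 0" unfolding p'_def using True by (simp add: monom_0)
    then show ?thesis by simp
  next
    case False
    have "degree p' \<le> d" unfolding p'_def d_def by (meson degree_diff_le degree_monom_le order_refl)
    moreover have "coeff p' d = 0" unfolding p'_def by simp
    show ?thesis
    proof (cases "p' = 0")
      case F: False
      have "degree p' \<noteq> d" using \<open>coeff p' d = 0\<close> F leading_coeff_0_iff by metis
      then show ?thesis using \<open>degree p' \<le> d\<close> by simp
    qed simp
  qed
  have "goodr h d (monom (coeff p d) d)"
    by (subst monom_as_sum) (rule goodr_sum, auto intro: goodr_monom)
  then obtain n i r where nir: "monom (coeff p d) d = n + i + r" "inN h n" "i \<in> Iset h" "r = 0 \<or> degree r < d"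
    unfolding goodr_def by blast
  have rp: "r + p' = 0 \<or> degree (r + p') < d"
    using nir(4) p'd by (rule lowdeg_add)
  obtain n' where n': "inN h n'" "(r + p') - n' \<in> Iset h"
  proof (cases "r + p' = 0")
    case True then show ?thesis using that[of 0] inN_0 is_idealD(1)[OF is_ideal_Iset] by simp
  next
    case False then have "degree (r + p') < degree p" using rp d_def by simp
    from less[OF this] obtain n'' where "inN h n''" "(r + p') - n'' \<in> Iset h" by blast
    then show ?thesis by (rule that)
  qed
  have "p = n + i + (r + p')" using nir(1) unfolding p'_def by (simp add: algebra_simps)
  then have "p - (n + n') = i + ((r + p') - n')" by (simp add: algebra_simps)
  also have "\<dots> \<in> Iset h" using nir(3) n'(2) is_idealD(2)[OF is_ideal_Iset] by blast
  finally show ?case using inN_add[OF nir(2) n'(1)] by blast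
qed




fun PQ :: "nat \<Rightarrow> nat \<Rightarrow> complex poly poly \<times> complex poly poly" where
  "PQ g 0 = (0, 1)"
| "PQ g (Suc j) = (let P = fst (PQ g j); Q = snd (PQ g j); m = g - 2*j in
     (cst (1 / of_nat (2*(m+1)*m)) * (cst (of_nat (16*(m+1)^2)) * Q - alpha * P),
      cst (1 / of_nat (2*m*(m-1))) * (P - alpha * Q)))"

lemma zrec_m2: "even m \<Longrightarrow> zeta (m+2) = alpha * zeta (m+1) - cst (of_nat (16*(m+1)^2)) * zeta m
   + of_nat (2*(m+1)*m) * gamma * zeta (m - 1)"
proof -
  assume "even m"
  then have o: "odd (m+1)" by simp
  have e: "Suc (m+1) = m+2" "m+1-1 = m" "m+1-2 = m-1" by simp_all
  from zrec_odd[OF o] show ?thesis by (simp only: e of_nat_cst)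
qed

lemma zrec_m1: "even m \<Longrightarrow> zeta (m+1) = alpha * zeta m + of_nat (2*m*(m-1)) * gamma * zeta (m - 2)"
  using zrec_even[of m] by simp

lemma gamma_zeta_K: "gamma * zeta (2*h) \<in> J (2*h+1)"
proof -
  have "of_nat (2*(2*h+2)*(2*h+1)) * (gamma * zeta (2*h)) = zeta (2*h+3) - alpha * zeta (2*h+2)"
    by (simp add: rec1 mult.assoc)
  also have "\<dots> \<in> J (2*h+1)" using Jg1 is_ideal_J by (intro ideal_diff is_idealD(3)) auto
  finally show ?thesis by (rule ideal_cancel_nat[OF is_ideal_J, rotated]) simp
qed

lemma gamma_J1: "y \<in> J (2*h) \<Longrightarrow> gamma * y \<in> J (2*h+1)"
proof -
  assume y: "y \<in> J (2*h)"
  let ?I = "{y. gamma * y \<in> J (2*h+1)}"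
  have I: "is_ideal ?I" by (rule is_ideal_colon[OF is_ideal_J])
  have "J (2*h) \<subseteq> ?I"
    using gamma_zeta_K[of h] Jg1[of h] is_idealD(3)[OF is_ideal_J]
    by (intro J_sub[OF I]) (auto simp: eval_nat_numeral)
  with y show ?thesis by auto
qed

lemma aux1:
  fixes E N :: "'a::comm_ring_1"
  assumes "E * N = 1" "z2 = a*z1 - k*z0 + N*g*zm"
  shows "(G*g)*zm - E*(k*Q - a*P)*Z = E*(G*z2 - a*(G*z1 - P*Z) + k*(G*z0 - Q*Z))"
proof -
  have "E*(G*(a*z1 - k*z0 + N*g*zm) - a*(G*z1 - P*Z) + k*(G*z0 - Q*Z)) = (E*N)*(G*g*zm) - E*(k*Q - a*P)*Z"
    by (simp add: algebra_simps)
  then show ?thesis using assms by simp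
qed

lemma aux2:
  fixes E N :: "'a::comm_ring_1"
  assumes "E * N = 1" "z1 = a*z0 + N*g*zm"
  shows "(G*g)*zm - E*(P - a*Q)*Z = E*((G*z1 - P*Z) - a*(G*z0 - Q*Z))"
proof -
  have "E*((G*(a*z0 + N*g*zm) - P*Z) - a*(G*z0 - Q*Z)) = (E*N)*(G*g*zm) - E*(P - a*Q)*Z"
    by (simp add: algebra_simps)
  then show ?thesis using assms by simp
qed

lemma CD:
  assumes "j \<le> h"
  shows "gamma ^ j * zeta (2*h - 2*j + 1) - fst (PQ (2*h) j) * zeta (2*h) \<in> J (2*h+1) \<and>
         gamma ^ j * zeta (2*h - 2*j) - snd (PQ (2*h) j) * zeta (2*h) \<in> J (2*h+1)"
  using assms
proof (induction j)
  case 0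
  have "zeta (2*h+1) \<in> J (2*h+1)" using Jg1 by simp
  then show ?case using is_idealD(1)[OF is_ideal_J] by simp
next
  case (Suc j)
  let ?K = "J (2*h+1)"
  have K: "is_ideal ?K" by (rule is_ideal_J)
  define m where "m = 2*h - 2*j"
  define P where "P = fst (PQ (2*h) j)"
  define Q where "Q = snd (PQ (2*h) j)"
  have m2: "2 \<le> m" "even m" using Suc.prems unfolding m_def by auto
  have IH: "gamma ^ j * zeta (m + 1) - P * zeta (2*h) \<in> ?K" "gamma ^ j * zeta m - Q * zeta (2*h) \<in> ?K"
    using Suc unfolding m_def P_def Q_def by auto
  have C: "gamma ^ j * zeta (m + 2) \<in> ?K"
  proof (cases j)
    case 0 then show ?thesis using Jg1 unfolding m_def by simp
  next
    case (Suc i)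
    have "gamma ^ i * zeta (2*h - 2*i) \<in> J (2*h)"
      using gamma_pow_zeta_Iset[of i h] Suc.prems \<open>j = Suc i\<close> J_Iset[of h] by simp
    then have "gamma * (gamma ^ i * zeta (2*h - 2*i)) \<in> ?K" by (rule gamma_J1)
    moreover have "2*h - 2*i = m + 2" unfolding m_def using Suc.prems \<open>j = Suc i\<close> by simp
    ultimately show ?thesis using \<open>j = Suc i\<close> by (simp add: mult.assoc)
  qed
  define c1 where "c1 = 2*(m+1)*m"
  define c2 where "c2 = 2*m*(m-1)"
  have "c1 \<noteq> 0" using m2 unfolding c1_def by simp
  then have "(of_nat c1 :: complex) \<noteq> 0" by (metis of_nat_eq_0_iff)
  from cst_inv[OF this] have c1: "cst (1 / of_nat c1) * of_nat c1 = 1" by (simp only: of_nat_cst)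
  have "c2 \<noteq> 0" using m2 unfolding c2_def by simp
  then have "(of_nat c2 :: complex) \<noteq> 0" by (metis of_nat_eq_0_iff)
  from cst_inv[OF this] have c2: "cst (1 / of_nat c2) * of_nat c2 = 1" by (simp only: of_nat_cst)
  have r2: "zeta (m+2) = alpha * zeta (m+1) - cst (of_nat (16*(m+1)^2)) * zeta m + of_nat c1 * gamma * zeta (m - 1)"
    unfolding c1_def by (rule zrec_m2[OF m2(2)])
  have r1: "zeta (m+1) = alpha * zeta m + of_nat c2 * gamma * zeta (m - 2)"
    unfolding c2_def by (rule zrec_m1[OF m2(2)])
  have PQs: "fst (PQ (2*h) (Suc j)) = cst (1 / of_nat c1) * (cst (of_nat (16*(m+1)^2)) * Q - alpha * P)"
            "snd (PQ (2*h) (Suc j)) = cst (1 / of_nat c2) * (P - alpha * Q)"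
    unfolding c1_def c2_def m_def P_def Q_def by (simp_all add: Let_def)
  have i1: "2*h - 2*Suc j + 1 = m - 1" "2*h - 2*Suc j = m - 2" unfolding m_def using Suc.prems by auto
  have e1: "gamma ^ Suc j * zeta (m - 1) - fst (PQ (2*h) (Suc j)) * zeta (2*h) =
     cst (1 / of_nat c1) * (gamma ^ j * zeta (m + 2) - alpha * (gamma ^ j * zeta (m + 1) - P * zeta (2*h))
        + cst (of_nat (16*(m+1)^2)) * (gamma ^ j * zeta m - Q * zeta (2*h)))"
    unfolding PQs power_Suc2 by (rule aux1[OF c1 r2])
  have e2: "gamma ^ Suc j * zeta (m - 2) - snd (PQ (2*h) (Suc j)) * zeta (2*h) =
     cst (1 / of_nat c2) * ((gamma ^ j * zeta (m + 1) - P * zeta (2*h)) - alpha * (gamma ^ j * zeta m - Q * zeta (2*h)))"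
    unfolding PQs power_Suc2 by (rule aux2[OF c2 r1])
  have "gamma ^ Suc j * zeta (m - 1) - fst (PQ (2*h) (Suc j)) * zeta (2*h) \<in> ?K"
    unfolding e1 by (rule is_idealD(3)[OF K is_idealD(2)[OF K ideal_diff[OF K C is_idealD(3)[OF K IH(1)]] is_idealD(3)[OF K IH(2)]]])
  moreover have "gamma ^ Suc j * zeta (m - 2) - snd (PQ (2*h) (Suc j)) * zeta (2*h) \<in> ?K"
    unfolding e2 by (rule is_idealD(3)[OF K ideal_diff[OF K IH(1) is_idealD(3)[OF K IH(2)]]])
  moreover have "m - 2 + 1 = m - 1" using m2 by simp
  ultimately show ?case unfolding i1 by simp
qed


lemma zeta_Suc0: "zeta (Suc 0) = alpha" using zeta_1 by simp

lemma bottom: "(alpha * snd (PQ (2*h) h) - fst (PQ (2*h) h)) * zeta (2*h) \<in> J (2*h+1)"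
proof -
  have K: "is_ideal (J (2*h+1))" by (rule is_ideal_J)
  from CD[of h h] have a: "gamma ^ h * alpha - fst (PQ (2*h) h) * zeta (2*h) \<in> J (2*h+1)"
    and b: "gamma ^ h - snd (PQ (2*h) h) * zeta (2*h) \<in> J (2*h+1)" by (simp_all add: zeta_Suc0 mult.commute)
  have "(alpha * snd (PQ (2*h) h) - fst (PQ (2*h) h)) * zeta (2*h) =
     (gamma ^ h * alpha - fst (PQ (2*h) h) * zeta (2*h)) - alpha * (gamma ^ h - snd (PQ (2*h) h) * zeta (2*h))"
    by (simp add: algebra_simps)
  also have "\<dots> \<in> J (2*h+1)" by (rule ideal_diff[OF K a is_idealD(3)[OF K b]])
  finally show ?thesis .
qed

lemma zeta_sq: "0 < h \<Longrightarrow> zeta (2*h) * zeta (2*h) \<in> J (2*h+1)"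
proof -
  assume h: "0 < h"
  have K: "is_ideal (J (2*h+1))" by (rule is_ideal_J)
  have a0: "gamma ^ 1 * zeta (2*h - 2*1 + 1) - fst (PQ (2*h) 1) * zeta (2*h) \<in> J (2*h+1)"
    using conjunct1[OF CD[of 1 h]] h by simp
  have e: "2*h - 2*1 + 1 = 2*h - 1" using h by simp
  have a: "gamma * zeta (2*h - 1) - fst (PQ (2*h) 1) * zeta (2*h) \<in> J (2*h+1)"
    using a0 by (simp only: e power_one_right)
  define A where "A = 2*(2*h+1)*(2*h)"
  define B where "B = 16*(2*h+1)^2"
  define \<kappa> :: complex where "\<kappa> = 1 / of_nat A * of_nat B"
  have P1: "fst (PQ (2*h) 1) = cst \<kappa>"
    by (simp add: Let_def \<kappa>_def cst_mult A_def B_def)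
  have "A \<noteq> 0" "B \<noteq> 0" unfolding A_def B_def using h by auto
  then have "(of_nat A :: complex) \<noteq> 0" "(of_nat B :: complex) \<noteq> 0" by (metis of_nat_eq_0_iff)+
  then have kn: "\<kappa> \<noteq> 0" unfolding \<kappa>_def by simp
  have "zeta (2*h) * zeta (2*h - 1) \<in> J (2*h)" using Jg(1)[of h] by (rule ideal_mult_right[OF is_ideal_J])
  then have b: "gamma * (zeta (2*h) * zeta (2*h - 1)) \<in> J (2*h+1)" by (rule gamma_J1)
  have "cst \<kappa> * (zeta (2*h) * zeta (2*h)) = gamma * (zeta (2*h) * zeta (2*h - 1)) - zeta (2*h) * (gamma * zeta (2*h - 1) - cst \<kappa> * zeta (2*h))"
    by (simp add: algebra_simps)
  also have "\<dots> \<in> J (2*h+1)" unfolding P1[symmetric] by (rule ideal_diff[OF K b is_idealD(3)[OF K a]])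
  finally have c: "cst \<kappa> * (zeta (2*h) * zeta (2*h)) \<in> J (2*h+1)" .
  have "zeta (2*h) * zeta (2*h) = cst (1/\<kappa>) * (cst \<kappa> * (zeta (2*h) * zeta (2*h)))"
    using kn by (simp add: mult.assoc[symmetric] cst_mult cst_1)
  then show ?thesis using is_idealD(3)[OF K c] by metis
qed

definition zb :: "nat \<Rightarrow> complex poly poly" where
  "zb h = (\<Prod>l<h. alpha ^ 2 - cst (of_nat (16 * (2*l+1)^2)))"

lemma zb_rel: "(\<exists>w. zeta (2*h) = zb h + gamma * w) \<and> (\<exists>w. zeta (2*h+1) = alpha * zb h + gamma * w)"
proof (induction h)
  case 0
  show ?case by (auto simp: zb_def zeta_Suc0 intro: exI[of _ 0])
next
  case (Suc h)
  then obtain w w' where w: "zeta (2*h) = zb h + gamma * w" and w': "zeta (2*h+1) = alpha * zb h + gamma * w'" by blast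
  have o: "odd (2*h+1)" by simp
  have e: "Suc (2*h+1) = 2*h+2" "2*h+1-1 = 2*h" "2*h+1-2 = 2*h - 1" by simp_all
  have r: "zeta (2*h+2) = alpha * zeta (2*h+1) - cst (of_nat (16*(2*h+1)^2)) * zeta (2*h)
     + of_nat (2*(2*h+1)*(2*h)) * gamma * zeta (2*h - 1)"
    using zrec_odd[OF o] by (simp only: e of_nat_cst)
  have zbS: "zb (Suc h) = zb h * (alpha ^ 2 - cst (of_nat (16 * (2*h+1)^2)))"
    unfolding zb_def by simp
  define W where "W = alpha * w' - cst (of_nat (16*(2*h+1)^2)) * w + of_nat (2*(2*h+1)*(2*h)) * zeta (2*h - 1)"
  have A: "zeta (2*h+2) = zb (Suc h) + gamma * W"
    unfolding zbS W_def using r w w' by (simp add: algebra_simps power2_eq_square)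
  have B: "zeta (2*h+3) = alpha * zb (Suc h) + gamma * (alpha * W + of_nat (2*(2*h+2)*(2*h+1)) * zeta (2*h))"
    unfolding rec1[of h] A by (simp add: algebra_simps)
  have ee: "2 * Suc h = 2*h+2" "2*h+2+1 = 2*h+3" by simp_all
  show ?case unfolding ee using A B by blast
qed


section \<open>Peeling linear factors\<close>

lemma is_ideal_colon_r: "is_ideal K \<Longrightarrow> is_ideal {y. y * z \<in> K}"
  using is_ideal_colon[of K z] by (simp add: mult.commute)

lemma peel:
  assumes L: "is_ideal L" and a: "(alpha - cst r) * y \<in> L" and u: "u \<in> L"
    and v: "poly u [:r:] = [:v:]" "v \<noteq> 0"
  shows "y \<in> L"
proof -
  have sd: "[:-[:r:], 1:] * synthetic_div u [:r:] + [:poly u [:r:]:] = u" by (rule synthetic_div_correct')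
  have e1: "[:-[:r:], 1:] = alpha - cst r" by (simp add: alpha_eq cst_def)
  have e2: "[:poly u [:r:]:] = cst v" using v by (simp add: cst_def)
  from sd have "(alpha - cst r) * synthetic_div u [:r:] + cst v = u" by (simp only: e1 e2)
  then have ue: "u = (alpha - cst r) * synthetic_div u [:r:] + cst v" by (rule sym)
  have "cst v * y = u * y - synthetic_div u [:r:] * ((alpha - cst r) * y)"
    by (subst ue) (simp add: algebra_simps)
  also have "\<dots> \<in> L" by (rule ideal_diff[OF L ideal_mult_right[OF L u] is_idealD(3)[OF L a]])
  finally have c: "cst v * y \<in> L" .
  have "y = cst (1/v) * (cst v * y)" using v(2) by (simp add: mult.assoc[symmetric] cst_mult cst_1)
  then show ?thesis using is_idealD(3)[OF L c] by metis
qed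

lemma peel_all:
  assumes L: "is_ideal L" and u: "u \<in> L"
    and nz: "\<And>x::real. x \<noteq> 0 \<Longrightarrow> \<exists>v. poly u [:of_real x:] = [:v:] \<and> v \<noteq> 0"
  shows "zb h * y \<in> L \<Longrightarrow> y \<in> L"
proof (induction h arbitrary: y)
  case 0 then show ?case by (simp add: zb_def)
next
  case (Suc h)
  define x0 :: real where "x0 = real (4*(2*h+1))"
  have x0: "x0 \<noteq> 0" "- x0 \<noteq> 0" unfolding x0_def by simp_all
  have c: "cst (of_nat (16*(2*h+1)^2)) = cst (of_real x0) * cst (of_real x0)"
    unfolding x0_def by (simp add: cst_mult power2_eq_square algebra_simps)
  have m: "cst (of_real (- x0)) = - cst (of_real x0)" by (simp add: cst_def)
  have zs: "zb (Suc h) = zb h * (alpha ^ 2 - cst (of_nat (16*(2*h+1)^2)))" unfolding zb_def by simp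
  have ring: "Z * (a ^ 2 - C * C) * Y = (a - C) * ((a - (- C)) * (Z * Y))" for Z a C Y :: "complex poly poly"
    by (simp add: algebra_simps power2_eq_square)
  have "zb (Suc h) * y = (alpha - cst (of_real x0)) * ((alpha - cst (of_real (- x0))) * (zb h * y))"
    unfolding zs c m by (rule ring)
  with Suc.prems have "(alpha - cst (of_real x0)) * ((alpha - cst (of_real (- x0))) * (zb h * y)) \<in> L" by simp
  moreover obtain v where "poly u [:of_real x0:] = [:v:]" "v \<noteq> 0" using nz[OF x0(1)] by blast
  ultimately have "(alpha - cst (of_real (- x0))) * (zb h * y) \<in> L" by (rule peel[OF L _ u])
  moreover obtain v' where "poly u [:of_real (- x0):] = [:v':]" "v' \<noteq> 0" using nz[OF x0(2)] by blast
  ultimately have "zb h * y \<in> L" by (rule peel[OF L _ u])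
  then show ?case by (rule Suc.IH)
qed


section \<open>Real evaluation and positivity\<close>

fun pqr :: "nat \<Rightarrow> real \<Rightarrow> nat \<Rightarrow> real \<times> real" where
  "pqr g x 0 = (0, 1)"
| "pqr g x (Suc j) = (let p = fst (pqr g x j); q = snd (pqr g x j); m = g - 2*j in
     (1 / real (2*(m+1)*m) * (real (16*(m+1)^2) * q - x * p), 1 / real (2*m*(m-1)) * (p - x * q)))"

lemma poly_cst: "poly (cst c) y = [:c:]" by (simp add: cst_def)
lemma poly_alpha: "poly alpha y = y" by (simp add: alpha_eq)
lemma cpoly_mult: "[:a:] * [:b:] = [:a * b:]" by (simp add: mult.commute)
lemma cpoly_diff: "[:a:] - [:b:] = [:a - b:]" by simp

lemma PQ_eval: "poly (fst (PQ g j)) [:of_real x:] = [:of_real (fst (pqr g x j)):] \<and>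
                poly (snd (PQ g j)) [:of_real x:] = [:of_real (snd (pqr g x j)):]"
proof (induction j)
  case 0 then show ?case by simp
next
  case (Suc j)
  then show ?case
    by (simp only: PQ.simps pqr.simps Let_def fst_conv snd_conv poly_mult poly_diff poly_cst poly_alpha
        cpoly_mult cpoly_diff of_real_mult of_real_diff of_real_divide of_real_1 of_real_of_nat_eq)
qed

lemma pqr_pos:
  assumes x: "x > 0" and j: "j \<le> h"
  shows "(-1)^j * snd (pqr (2*h) x j) > 0 \<and> (-1)^(Suc j) * fst (pqr (2*h) x j) \<ge> 0"
  using j
proof (induction j)
  case 0 then show ?case by simp
next
  case (Suc j)
  define m where "m = 2*h - 2*j"
  have m: "m \<ge> 2" using Suc.prems unfolding m_def by simp
  define p where "p = fst (pqr (2*h) x j)"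
  define q where "q = snd (pqr (2*h) x j)"
  define s :: real where "s = (-1)^j"
  from Suc have IH: "s * q > 0" "- s * p \<ge> 0" unfolding s_def p_def q_def by auto
  define A where "A = 1 / real (2*(m+1)*m)"
  define B where "B = 1 / real (2*m*(m-1))"
  define C where "C = real (16*(m+1)^2)"
  have "2*(m+1)*m > (0::nat)" "2*m*(m-1) > (0::nat)" "16*(m+1)^2 > (0::nat)" using m by auto
  then have "real (2*(m+1)*m) > 0" "real (2*m*(m-1)) > 0" "real (16*(m+1)^2) > 0"
    by (simp_all only: of_nat_0_less_iff)
  then have ABC: "A > 0" "B > 0" "C > 0" unfolding A_def B_def C_def by (simp_all only: zero_less_divide_1_iff)
  have e: "fst (pqr (2*h) x (Suc j)) = A * (C * q - x * p)" "snd (pqr (2*h) x (Suc j)) = B * (p - x * q)"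
    unfolding A_def B_def C_def p_def q_def m_def by (simp_all add: Let_def)
  have s1: "(-1)^(Suc j) = - s" "(-1)^(Suc (Suc j)) = (s::real)" unfolding s_def by simp_all
  have "(-1)^(Suc j) * snd (pqr (2*h) x (Suc j)) = B * ((- s * p) + x * (s * q))"
    unfolding s1 e by (simp add: algebra_simps)
  moreover have "B * ((- s * p) + x * (s * q)) > 0"
    by (rule mult_pos_pos[OF ABC(2) add_nonneg_pos[OF IH(2) mult_pos_pos[OF x IH(1)]]])
  moreover have "(-1)^(Suc (Suc j)) * fst (pqr (2*h) x (Suc j)) = A * (C * (s * q) + x * (- s * p))"
    unfolding s1 e by (simp add: algebra_simps)
  moreover have "A * (C * (s * q) + x * (- s * p)) \<ge> 0"
    by (rule mult_nonneg_nonneg[OF less_imp_le[OF ABC(1)] add_nonneg_nonneg[OF mult_nonneg_nonneg[OF less_imp_le[OF ABC(3)] less_imp_le[OF IH(1)]] mult_nonneg_nonneg[OF less_imp_le[OF x] IH(2)]]])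
  ultimately show ?case by simp
qed

lemma pqr_neg:
  assumes x: "x < 0" and j: "j \<le> h"
  shows "snd (pqr (2*h) x j) > 0 \<and> fst (pqr (2*h) x j) \<ge> 0"
  using j
proof (induction j)
  case 0 then show ?case by simp
next
  case (Suc j)
  define m where "m = 2*h - 2*j"
  have m: "m \<ge> 2" using Suc.prems unfolding m_def by simp
  define p where "p = fst (pqr (2*h) x j)"
  define q where "q = snd (pqr (2*h) x j)"
  from Suc have IH: "q > 0" "p \<ge> 0" unfolding p_def q_def by auto
  define A where "A = 1 / real (2*(m+1)*m)"
  define B where "B = 1 / real (2*m*(m-1))"
  define C where "C = real (16*(m+1)^2)"
  have "2*(m+1)*m > (0::nat)" "2*m*(m-1) > (0::nat)" "16*(m+1)^2 > (0::nat)" using m by auto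
  then have "real (2*(m+1)*m) > 0" "real (2*m*(m-1)) > 0" "real (16*(m+1)^2) > 0"
    by (simp_all only: of_nat_0_less_iff)
  then have ABC: "A > 0" "B > 0" "C > 0" unfolding A_def B_def C_def by (simp_all only: zero_less_divide_1_iff)
  have e: "fst (pqr (2*h) x (Suc j)) = A * (C * q + (- x) * p)" "snd (pqr (2*h) x (Suc j)) = B * (p + (- x) * q)"
    unfolding A_def B_def C_def p_def q_def m_def by (simp_all add: Let_def)
  have "B * (p + (- x) * q) > 0" using ABC IH x by (intro mult_pos_pos add_nonneg_pos) auto
  moreover have "A * (C * q + (- x) * p) \<ge> 0" using ABC IH x
    by (intro mult_nonneg_nonneg add_nonneg_nonneg) auto
  ultimately show ?case unfolding e by simp
qed

lemma v_nz: "x \<noteq> 0 \<Longrightarrow> x * snd (pqr (2*h) x h) - fst (pqr (2*h) x h) \<noteq> 0"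
proof (cases "x > 0")
  case True
  from pqr_pos[OF True order_refl[of h]]
  have a: "(-1)^h * snd (pqr (2*h) x h) > 0" "(-1)^(Suc h) * fst (pqr (2*h) x h) \<ge> 0" by auto
  have "(-1)^h * (x * snd (pqr (2*h) x h) - fst (pqr (2*h) x h)) =
        x * ((-1)^h * snd (pqr (2*h) x h)) + (-1)^(Suc h) * fst (pqr (2*h) x h)"
    by (simp add: algebra_simps)
  also have "\<dots> > 0" using mult_pos_pos[OF True a(1)] a(2) by linarith
  finally show ?thesis by auto
next
  case False
  assume "x \<noteq> 0"
  with False have x: "x < 0" by simp
  from pqr_neg[OF x order_refl[of h]] have "snd (pqr (2*h) x h) > 0" "fst (pqr (2*h) x h) \<ge> 0" by auto
  then have "x * snd (pqr (2*h) x h) < 0" using x by (simp add: mult_neg_pos)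
  then show ?thesis using \<open>fst _ \<ge> 0\<close> by simp
qed

lemma u_nz: "x \<noteq> 0 \<Longrightarrow> \<exists>v. poly (alpha * snd (PQ (2*h) h) - fst (PQ (2*h) h)) [:of_real x:] = [:v:] \<and> v \<noteq> 0"
proof -
  assume x: "x \<noteq> 0"
  have "poly (alpha * snd (PQ (2*h) h) - fst (PQ (2*h) h)) [:of_real x:]
      = [:of_real (x * snd (pqr (2*h) x h) - fst (pqr (2*h) x h)):]"
    using PQ_eval[of "2*h" h x] by (simp add: poly_alpha)
  moreover have "(of_real (x * snd (pqr (2*h) x h) - fst (pqr (2*h) x h)) :: complex) \<noteq> 0"
    using v_nz[OF x, of h] by (simp only: of_real_eq_0_iff not_False_eq_True)
  ultimately show ?thesis by blast
qed

section \<open>J g = J (g+1)\<close>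

lemma J_eq: "J (2*h) = J (2*h+1)"
proof (cases "h = 0")
  case True
  have z2: "zeta 2 = alpha * alpha - 16" using zrec_odd[of 1] by (simp add: numeral_2_eq_2 zeta_Suc0)
  have "of_nat 16 * 1 = alpha * zeta 1 - zeta 2" by (simp add: z2 zeta_Suc0)
  also have "\<dots> \<in> J 1" using J_gens[of 1] is_ideal_J[of 1]
    by (intro ideal_diff is_idealD(3)) (auto simp: numeral_2_eq_2)
  finally have "(1::complex poly poly) \<in> J 1" by (rule ideal_cancel_nat[OF is_ideal_J, rotated]) simp
  then have "J 1 = UNIV" by (rule ideal_one[OF is_ideal_J])
  moreover have "J 0 = UNIV" using J_Iset[of 0] by simp
  ultimately show ?thesis using True by simp
next
  case False
  let ?K = "J (2*h+1)"
  have K: "is_ideal ?K" by (rule is_ideal_J)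
  let ?L = "{y. y * zeta (2*h) \<in> ?K}"
  have L: "is_ideal ?L" by (rule is_ideal_colon_r[OF K])
  have u: "alpha * snd (PQ (2*h) h) - fst (PQ (2*h) h) \<in> ?L" using bottom[of h] by simp
  obtain w where w: "zeta (2*h) = zb h + gamma * w" using zb_rel[of h] by blast
  have "zb h * zeta (2*h) = zeta (2*h) * zeta (2*h) - w * (gamma * zeta (2*h))"
    using w by (simp add: algebra_simps)
  also have "\<dots> \<in> ?K" using False
    by (intro ideal_diff[OF K zeta_sq is_idealD(3)[OF K gamma_zeta_K]]) auto
  finally have "zb h * 1 \<in> ?L" by simp
  from peel_all[OF L u u_nz this] have z: "zeta (2*h) \<in> ?K" by simp
  show ?thesis
  proof
    show "J (2*h) \<subseteq> ?K" using z Jg1[of h] by (intro J_sub[OF K]) auto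
  next
    have "zeta (2*h+3) \<in> J (2*h)" unfolding rec1 using Jg[of h] is_ideal_J[of "2*h"]
      by (intro is_idealD(2) is_idealD(3)) (auto simp: mult.assoc)
    then show "?K \<subseteq> J (2*h)" using Jg[of h] by (intro J_sub[OF is_ideal_J]) (auto simp: eval_nat_numeral)
  qed
qed




lemma LM_in_M:
  assumes f: "f \<in> J (2*h)" "f \<noteq> 0"
  shows "lex_lead_mon f \<in> gen_ideal {mon (2*h - 2*i) i | i. i \<le> h}"
proof -
  let ?M = "{mon (2*h - 2*i) i | i. i \<le> h}"
  define d where "d = degree f"
  define c where "c = degree (lead_coeff f)"
  have fI: "f \<in> Iset h" using f J_Iset by simp
  have nk: "\<not> (c < h \<and> d + 2 * c < 2 * h)" using KL[OF fI f(2)] unfolding c_def d_def .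
  obtain i where i: "i \<le> h" "i \<le> c" "2*h - 2*i \<le> d"
  proof (cases "h \<le> c")
    case True then show ?thesis using that[of h] by simp
  next
    case False then show ?thesis using that[of c] nk by simp
  qed
  have "mon (2*h - 2*i) i \<in> gen_ideal ?M" using gen_sub[of ?M] i(1) by blast
  then have "mon (d - (2*h - 2*i)) (c - i) * mon (2*h - 2*i) i \<in> gen_ideal ?M"
    by (rule is_idealD(3)[OF is_ideal_gen])
  moreover have "mon (d - (2*h - 2*i)) (c - i) * mon (2*h - 2*i) i = mon d c"
    using i by (simp add: mon_mult)
  ultimately show ?thesis unfolding lex_lead_mon_def c_def d_def by simp
qed

lemma initial_eq: "initial_ideal (J (2*h)) = gen_ideal {mon (2*h - 2*i) i | i. i \<le> h}"
proof
  show "initial_ideal (J (2*h)) \<subseteq> gen_ideal {mon (2*h - 2*i) i | i. i \<le> h}"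
    unfolding initial_ideal_def by (rule gen_least[OF is_ideal_gen]) (auto intro: LM_in_M)
next
  have "{mon (2*h - 2*i) i | i. i \<le> h} \<subseteq> {lex_lead_mon f | f. f \<in> J (2*h) \<and> f \<noteq> 0}"
  proof
    fix x assume "x \<in> {mon (2*h - 2*i) i | i. i \<le> h}"
    then obtain i where i: "i \<le> h" "x = mon (2*h - 2*i) i" by blast
    have "gamma ^ i * zeta (2*h - 2*i) \<in> J (2*h)" using gamma_pow_zeta_Iset[OF i(1)] J_Iset by simp
    moreover have "x = lex_lead_mon (gamma ^ i * zeta (2*h - 2*i))" using i(2) LM_gamma_zeta by simp
    ultimately show "x \<in> {lex_lead_mon f | f. f \<in> J (2*h) \<and> f \<noteq> 0}" using gamma_pow_zeta_nz by blast
  qed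
  then show "gen_ideal {mon (2*h - 2*i) i | i. i \<le> h} \<subseteq> initial_ideal (J (2*h))"
    unfolding initial_ideal_def using gen_sub by (intro gen_least[OF is_ideal_gen]) blast
qed

lemma GB: "is_groebner_basis {gamma ^ i * zeta (2*h - 2 * i) | i. i \<le> h} (J (2*h))"
proof -
  let ?G = "{gamma ^ i * zeta (2*h - 2 * i) | i. i \<le> h}"
  have sub: "?G \<subseteq> J (2*h)" using gamma_pow_zeta_Iset J_Iset by auto
  have "?G - {0} = ?G" using gamma_pow_zeta_nz by auto
  moreover have "lex_lead_mon ` ?G = {mon (2*h - 2*i) i | i. i \<le> h}"
    using LM_gamma_zeta by (auto simp: image_def)
  ultimately have "lex_lead_mon ` (?G - {0}) = {mon (2*h - 2*i) i | i. i \<le> h}" by simp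
  then show ?thesis unfolding is_groebner_basis_def using sub initial_eq by simp
qed


section \<open>Normal forms\<close>

definition Sset :: "nat \<Rightarrow> (nat \<times> nat) set" where
  "Sset g = {(a, c). c < g div 2 \<and> a < g - 2 * c}"

definition Phi :: "nat \<Rightarrow> (nat \<times> nat \<Rightarrow> complex) \<Rightarrow> complex poly poly" where
  "Phi g r = (\<Sum>(a, c)\<in>Sset g. monom (monom (r (a, c)) c) a)"

lemma finite_Sset: "finite (Sset g)"
proof -
  have "Sset g \<subseteq> {..<g} \<times> {..<g div 2}" unfolding Sset_def by auto
  then show ?thesis by (rule finite_subset) simp
qed

lemma coeff_Phi: "coeff (coeff (Phi g r) a) c = (if (a, c) \<in> Sset g then r (a, c) else 0)"
proof -
  have "coeff (coeff (Phi g r) a) c = (\<Sum>x\<in>Sset g. (if x = (a, c) then r x else 0))"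
    unfolding Phi_def coeff_sum
    by (rule sum.cong) (auto simp: coeff_monom split: if_splits)
  also have "\<dots> = (if (a, c) \<in> Sset g then r (a, c) else 0)"
    using finite_Sset by (simp add: sum.delta')
  finally show ?thesis .
qed

lemma Sset_iff: "(a, c) \<in> Sset (2*h) \<longleftrightarrow> c < h \<and> a + 2 * c < 2 * h"
  unfolding Sset_def by auto

lemma NF: "\<forall>p. \<exists>!r :: nat \<times> nat \<Rightarrow> complex.
          (\<forall>x. x \<notin> Sset (2*h) \<longrightarrow> r x = 0) \<and> p - Phi (2*h) r \<in> J (2*h)"
proof
  fix p
  obtain n where n: "inN h n" "p - n \<in> Iset h" using reduce by blast
  define r0 where "r0 = (\<lambda>(a, c). if (a, c) \<in> Sset (2*h) then coeff (coeff n a) c else 0)"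
  have "Phi (2*h) r0 = n"
  proof (rule poly_eqI, rule poly_eqI)
    fix a c
    show "coeff (coeff (Phi (2*h) r0) a) c = coeff (coeff n a) c"
      unfolding coeff_Phi r0_def using n(1) unfolding inN_def Sset_iff by auto
  qed
  then have r0: "(\<forall>x. x \<notin> Sset (2*h) \<longrightarrow> r0 x = 0) \<and> p - Phi (2*h) r0 \<in> J (2*h)"
    using n(2) J_Iset by (auto simp: r0_def)
  show "\<exists>!r :: nat \<times> nat \<Rightarrow> complex. (\<forall>x. x \<notin> Sset (2*h) \<longrightarrow> r x = 0) \<and> p - Phi (2*h) r \<in> J (2*h)"
  proof (rule ex1I[of _ r0])
    show "(\<forall>x. x \<notin> Sset (2*h) \<longrightarrow> r0 x = 0) \<and> p - Phi (2*h) r0 \<in> J (2*h)" by (rule r0)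
  next
    fix r assume r: "(\<forall>x. x \<notin> Sset (2*h) \<longrightarrow> r x = 0) \<and> p - Phi (2*h) r \<in> J (2*h)"
    have "Phi (2*h) r - Phi (2*h) r0 = (p - Phi (2*h) r0) - (p - Phi (2*h) r)" by simp
    also have "\<dots> \<in> Iset h"
    proof -
      have a: "p - Phi (2*h) r0 \<in> Iset h" using r0 J_Iset[of h] by simp
      have b: "p - Phi (2*h) r \<in> Iset h" using r J_Iset[of h] by simp
      show ?thesis by (rule ideal_diff[OF is_ideal_Iset a b])
    qed
    finally have I: "Phi (2*h) r - Phi (2*h) r0 \<in> Iset h" .
    have N: "inN h (Phi (2*h) r - Phi (2*h) r0)"
      unfolding inN_def by (auto simp: coeff_Phi Sset_iff split: if_splits)
    have z: "Phi (2*h) r - Phi (2*h) r0 = 0" by (rule inN_Iset_zero[OF N I])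
    show "r = r0"
    proof
      fix x
      obtain a c :: nat where x: "x = (a, c)" by (cases x)
      have "coeff (coeff (Phi (2*h) r) a) c = coeff (coeff (Phi (2*h) r0) a) c" using z by simp
      then show "r x = r0 x" using r r0 unfolding x coeff_Phi by (auto split: if_splits)
    qed
  qed
qed


theorem proposition5p6:
  fixes g :: nat
  assumes "even g"
  shows "J g = J (g + 1)
    \<and> is_groebner_basis {gamma ^ i * zeta (g - 2 * i) | i. i \<le> g div 2} (J g)
    \<and> initial_ideal (J g) = gen_ideal {mon (g - 2 * i) i | i. i \<le> g div 2}
    \<and> (\<forall>p. \<exists>!r :: nat \<times> nat \<Rightarrow> complex.
          (\<forall>x. x \<notin> {(a, c). c < g div 2 \<and> a < g - 2 * c} \<longrightarrow> r x = 0)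
          \<and> p - (\<Sum>(a, c)\<in>{(a, c). c < g div 2 \<and> a < g - 2 * c}. monom (monom (r (a, c)) c) a)
              \<in> J g)"
proof -
  obtain h where g: "g = 2*h" using assms by (metis evenE)
  have hd: "g div 2 = h" using g by simp
  have 1: "J g = J (g + 1)" using J_eq[of h] g by simp
  have 2: "is_groebner_basis {gamma ^ i * zeta (g - 2 * i) | i. i \<le> g div 2} (J g)"
    using GB[of h] g hd by simp
  have 3: "initial_ideal (J g) = gen_ideal {mon (g - 2 * i) i | i. i \<le> g div 2}"
    using initial_eq[of h] g hd by simp
  have 4: "\<forall>p. \<exists>!r :: nat \<times> nat \<Rightarrow> complex.
          (\<forall>x. x \<notin> {(a, c). c < g div 2 \<and> a < g - 2 * c} \<longrightarrow> r x = 0)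
          \<and> p - (\<Sum>(a, c)\<in>{(a, c). c < g div 2 \<and> a < g - 2 * c}. monom (monom (r (a, c)) c) a)
              \<in> J g"
    using NF[of h] unfolding Phi_def Sset_def g[symmetric] .
  show ?thesis using 1 2 3 4 by blast
qed

end
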